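(* Let $x<w$ in $W$ and let $\mathfrak w=s_1\cdots s_n$ be a reduced word of $w$ which is a good word for $x$, with $\lambda_{x,\mathfrak w}=(i_1,\ldots,i_d)$ and $i_1>1$. Then: (i) $x\not\le s_1w$; (ii) $S(s_1x,s_1w)=S(x,w)$; (iii) the reduced word $s_1\mathfrak w:=s_2\cdots s_n$ of $s_1w$ is a good word for $s_1x$, and $\lambda_{s_1x,s_1\mathfrak w}=(i_1-1,\ldots,i_d-1)$ (positions in $s_2\cdots s_n$ being numbered $1,\ldots,n-1$).
   Context: Let $W$ be the Weyl group of a finite reduced root system $\Phi$ with positive roots $\Phi_+$ and simple reflections $S$; $\ell$ is the length and $\le$ the Bruhat order. For $x\le w$ put $S(x,w)=\{\alpha\in\Phi_+ : x\le ws_\alpha<w\}$. For a reduced word $\mathfrak w=s_1\cdots s_n$ of $w$ ($s_i\in S$), let $\lambda_{x,\mathfrak w}$ be the set of $i\in\{1,\ldots,n\}$ such that $x\le s_1\cdots\widehat{s_i}\cdots s_n$ (the Weyl group element obtained by omitting $s_i$), written as the increasing tuple $(i_1,\ldots,i_d)$, $i_1<\cdots<i_d$. The word $\mathfrak w$ is called a good word for $x$ if $x=s_1\cdots\widehat{s_{i_1}}\cdots\widehat{s_{i_d}}\cdots s_n$ (omitting exactly the positions in $\lambda_{x,\mathfrak w}$). *)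

theory Defs
  imports "HOL-Analysis.Analysis"
begin

definition refl :: "'a::euclidean_space \<Rightarrow> 'a \<Rightarrow> 'a" where
  "refl \<alpha> v = v - (2 * (v \<bullet> \<alpha>) / (\<alpha> \<bullet> \<alpha>)) *\<^sub>R \<alpha>"

definition root_system :: "'a::euclidean_space set \<Rightarrow> bool" where
  "root_system \<Phi> \<longleftrightarrow> finite \<Phi> \<and> 0 \<notin> \<Phi> \<and> span \<Phi> = UNIV
     \<and> (\<forall>\<alpha>\<in>\<Phi>. refl \<alpha> ` \<Phi> = \<Phi>)
     \<and> (\<forall>\<alpha>\<in>\<Phi>. \<forall>\<beta>\<in>\<Phi>. 2 * (\<beta> \<bullet> \<alpha>) / (\<alpha> \<bullet> \<alpha>) \<in> \<int>)"

definition reduced_root_system :: "'a::euclidean_space set \<Rightarrow> bool" where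
  "reduced_root_system \<Phi> \<longleftrightarrow> root_system \<Phi>
     \<and> (\<forall>\<alpha>\<in>\<Phi>. \<forall>c::real. c *\<^sub>R \<alpha> \<in> \<Phi> \<longrightarrow> c = 1 \<or> c = -1)"

text \<open>A positive system is determined by a regular vector \<open>f\<close> (no root orthogonal to it).\<close>
definition regular :: "'a::euclidean_space set \<Rightarrow> 'a \<Rightarrow> bool" where
  "regular \<Phi> f \<longleftrightarrow> (\<forall>\<alpha>\<in>\<Phi>. \<alpha> \<bullet> f \<noteq> 0)"

definition pos_roots :: "'a::euclidean_space set \<Rightarrow> 'a \<Rightarrow> 'a set" where
  "pos_roots \<Phi> f = {\<alpha>\<in>\<Phi>. \<alpha> \<bullet> f > 0}"

definition simple_roots :: "'a::euclidean_space set \<Rightarrow> 'a \<Rightarrow> 'a set" where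
  "simple_roots \<Phi> f = {\<alpha>\<in>pos_roots \<Phi> f.
      \<not> (\<exists>\<beta>\<in>pos_roots \<Phi> f. \<exists>\<gamma>\<in>pos_roots \<Phi> f. \<alpha> = \<beta> + \<gamma>)}"

definition simple_refls :: "'a::euclidean_space set \<Rightarrow> 'a \<Rightarrow> ('a \<Rightarrow> 'a) set" where
  "simple_refls \<Phi> f = refl ` simple_roots \<Phi> f"

definition wprod :: "('a \<Rightarrow> 'a) list \<Rightarrow> 'a \<Rightarrow> 'a" where
  "wprod ws = foldr (\<circ>) ws id"

definition weyl :: "'a::euclidean_space set \<Rightarrow> 'a \<Rightarrow> ('a \<Rightarrow> 'a) set" where
  "weyl \<Phi> f = {wprod ws | ws. set ws \<subseteq> simple_refls \<Phi> f}"

definition len :: "'a::euclidean_space set \<Rightarrow> 'a \<Rightarrow> ('a \<Rightarrow> 'a) \<Rightarrow> nat" where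
  "len \<Phi> f w = (LEAST n. \<exists>ws. set ws \<subseteq> simple_refls \<Phi> f \<and> length ws = n \<and> wprod ws = w)"

definition bruhat_step :: "'a::euclidean_space set \<Rightarrow> 'a \<Rightarrow> (('a \<Rightarrow> 'a) \<times> ('a \<Rightarrow> 'a)) set" where
  "bruhat_step \<Phi> f = {(y, y \<circ> refl \<alpha>) | y \<alpha>. y \<in> weyl \<Phi> f \<and> \<alpha> \<in> pos_roots \<Phi> f
                        \<and> len \<Phi> f y < len \<Phi> f (y \<circ> refl \<alpha>)}"

definition bruhat_le :: "'a::euclidean_space set \<Rightarrow> 'a \<Rightarrow> ('a \<Rightarrow> 'a) \<Rightarrow> ('a \<Rightarrow> 'a) \<Rightarrow> bool" where
  "bruhat_le \<Phi> f x w \<longleftrightarrow> x \<in> weyl \<Phi> f \<and> (x, w) \<in> (bruhat_step \<Phi> f)\<^sup>*"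

definition bruhat_less :: "'a::euclidean_space set \<Rightarrow> 'a \<Rightarrow> ('a \<Rightarrow> 'a) \<Rightarrow> ('a \<Rightarrow> 'a) \<Rightarrow> bool" where
  "bruhat_less \<Phi> f x w \<longleftrightarrow> bruhat_le \<Phi> f x w \<and> x \<noteq> w"

definition Sxw :: "'a::euclidean_space set \<Rightarrow> 'a \<Rightarrow> ('a \<Rightarrow> 'a) \<Rightarrow> ('a \<Rightarrow> 'a) \<Rightarrow> 'a set" where
  "Sxw \<Phi> f x w = {\<alpha>\<in>pos_roots \<Phi> f. bruhat_le \<Phi> f x (w \<circ> refl \<alpha>)
                                    \<and> bruhat_less \<Phi> f (w \<circ> refl \<alpha>) w}"

definition reduced_word :: "'a::euclidean_space set \<Rightarrow> 'a \<Rightarrow> ('a \<Rightarrow> 'a) list \<Rightarrow> ('a \<Rightarrow> 'a) \<Rightarrow> bool" where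
  "reduced_word \<Phi> f ws w \<longleftrightarrow> set ws \<subseteq> simple_refls \<Phi> f \<and> wprod ws = w \<and> length ws = len \<Phi> f w"

text \<open>Omit the \<open>i\<close>-th letter (positions numbered from 1).\<close>
definition omit :: "nat \<Rightarrow> 'b list \<Rightarrow> 'b list" where
  "omit i ws = take (i - 1) ws @ drop i ws"

text \<open>\<open>\<lambda>\<^sub>x\<^sub>,\<^sub>w\<close> as the set of its entries (the tuple is its increasing enumeration).\<close>
definition lam :: "'a::euclidean_space set \<Rightarrow> 'a \<Rightarrow> ('a \<Rightarrow> 'a) \<Rightarrow> ('a \<Rightarrow> 'a) list \<Rightarrow> nat set" where
  "lam \<Phi> f x ws = {i\<in>{1..length ws}. bruhat_le \<Phi> f x (wprod (omit i ws))}"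

definition good_word :: "'a::euclidean_space set \<Rightarrow> 'a \<Rightarrow> ('a \<Rightarrow> 'a) \<Rightarrow> ('a \<Rightarrow> 'a) list \<Rightarrow> bool" where
  "good_word \<Phi> f x ws \<longleftrightarrow> x = wprod (nths ws {j. Suc j \<notin> lam \<Phi> f x ws})"

end

theory Submission
  imports Defs
begin


lemma refl_inner: assumes "a \<noteq> 0" shows "refl a u \<bullet> refl a v = u \<bullet> v"
proof -
  have aa: "a \<bullet> a \<noteq> 0" using assms by simp
  show ?thesis unfolding refl_def using aa
    by (simp add: inner_diff_left inner_diff_right inner_commute field_simps)
qed

lemma refl_refl: assumes "a \<noteq> 0" shows "refl a (refl a v) = v"
proof -
  have aa: "a \<bullet> a \<noteq> 0" using assms by simp
  show ?thesis unfolding refl_def using aa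
    by (simp add: inner_diff_left algebra_simps)
qed

lemma refl_comp_refl: "a \<noteq> 0 \<Longrightarrow> refl a \<circ> refl a = id"
  by (rule ext) (simp add: refl_refl)

lemma refl_neg: "refl (-a) = refl a"
  by (rule ext) (simp add: refl_def)

lemma refl_self: "a \<noteq> 0 \<Longrightarrow> refl a a = -a"
  by (simp add: refl_def scaleR_2)

lemma refl_add: "refl a (u + v) = refl a u + refl a v"
  unfolding refl_def by (simp add: inner_add_left add_divide_distrib scaleR_add_left algebra_simps)
lemma refl_scale: "refl a (r *\<^sub>R u) = r *\<^sub>R refl a u"
  unfolding refl_def by (simp add: scaleR_diff_right)
lemma linear_refl: "linear (refl a)"
  by (rule linearI) (simp_all add: refl_add refl_scale)



locale RS =
  fixes \<Phi> :: "'a::euclidean_space set" and f :: 'a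
  assumes red: "reduced_root_system \<Phi>" and reg: "regular \<Phi> f"
begin

abbreviation "P \<equiv> pos_roots \<Phi> f"
abbreviation "D \<equiv> simple_roots \<Phi> f"

lemma fin: "finite \<Phi>" and zero: "0 \<notin> \<Phi>" and refl_closed: "\<alpha> \<in> \<Phi> \<Longrightarrow> refl \<alpha> ` \<Phi> = \<Phi>"
  and cartan: "\<alpha> \<in> \<Phi> \<Longrightarrow> \<beta> \<in> \<Phi> \<Longrightarrow> 2 * (\<beta> \<bullet> \<alpha>) / (\<alpha> \<bullet> \<alpha>) \<in> \<int>"
  and reduced: "\<alpha> \<in> \<Phi> \<Longrightarrow> c *\<^sub>R \<alpha> \<in> \<Phi> \<Longrightarrow> c = 1 \<or> c = -1"
proof -
  have r: "finite \<Phi> \<and> 0 \<notin> \<Phi> \<and> span \<Phi> = UNIV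
     \<and> (\<forall>\<alpha>\<in>\<Phi>. refl \<alpha> ` \<Phi> = \<Phi>)
     \<and> (\<forall>\<alpha>\<in>\<Phi>. \<forall>\<beta>\<in>\<Phi>. 2 * (\<beta> \<bullet> \<alpha>) / (\<alpha> \<bullet> \<alpha>) \<in> \<int>)"
    and r2: "\<forall>\<alpha>\<in>\<Phi>. \<forall>c::real. c *\<^sub>R \<alpha> \<in> \<Phi> \<longrightarrow> c = 1 \<or> c = -1"
    using red unfolding reduced_root_system_def root_system_def by auto
  show "finite \<Phi>" "0 \<notin> \<Phi>" using r by auto
  show "\<alpha> \<in> \<Phi> \<Longrightarrow> refl \<alpha> ` \<Phi> = \<Phi>" using r by auto
  show "\<alpha> \<in> \<Phi> \<Longrightarrow> \<beta> \<in> \<Phi> \<Longrightarrow> 2 * (\<beta> \<bullet> \<alpha>) / (\<alpha> \<bullet> \<alpha>) \<in> \<int>" using r by auto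
  show "\<alpha> \<in> \<Phi> \<Longrightarrow> c *\<^sub>R \<alpha> \<in> \<Phi> \<Longrightarrow> c = 1 \<or> c = -1" using r2 by auto
qed

lemma nz: "\<alpha> \<in> \<Phi> \<Longrightarrow> \<alpha> \<noteq> 0" using zero by auto

lemma refl_mem: "\<alpha> \<in> \<Phi> \<Longrightarrow> \<beta> \<in> \<Phi> \<Longrightarrow> refl \<alpha> \<beta> \<in> \<Phi>"
  using refl_closed by blast

lemma neg_mem: "\<alpha> \<in> \<Phi> \<Longrightarrow> -\<alpha> \<in> \<Phi>"
  using refl_mem[of \<alpha> \<alpha>] refl_self[of \<alpha>] nz[of \<alpha>] by simp

lemma regf: "\<alpha> \<in> \<Phi> \<Longrightarrow> \<alpha> \<bullet> f \<noteq> 0" using reg unfolding regular_def by auto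

lemma P_iff: "\<beta> \<in> P \<longleftrightarrow> \<beta> \<in> \<Phi> \<and> \<beta> \<bullet> f > 0" unfolding pos_roots_def by auto

lemma D_P: "\<alpha> \<in> D \<Longrightarrow> \<alpha> \<in> P" unfolding simple_roots_def by auto

lemma D_Phi: "\<alpha> \<in> D \<Longrightarrow> \<alpha> \<in> \<Phi>" using D_P P_iff by auto

lemma finD: "finite D" by (rule finite_subset[OF _ fin]) (use D_Phi in blast)
lemma finP: "finite P" by (rule finite_subset[OF _ fin]) (use P_iff in blast)

lemma root_cases: "\<beta> \<in> \<Phi> \<Longrightarrow> \<beta> \<in> P \<or> -\<beta> \<in> P"
proof -
  assume b: "\<beta> \<in> \<Phi>"
  have "\<beta> \<bullet> f > 0 \<or> (-\<beta>) \<bullet> f > 0" using regf[OF b] by (auto simp: inner_minus_left)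
  thus ?thesis using b neg_mem[OF b] P_iff by blast
qed

lemma P_induct[consumes 1, case_names step]:
  assumes "\<beta> \<in> P" and step: "\<And>\<beta>. \<beta> \<in> P \<Longrightarrow> (\<And>\<gamma>. \<gamma> \<in> P \<Longrightarrow> \<gamma> \<bullet> f < \<beta> \<bullet> f \<Longrightarrow> Q \<gamma>) \<Longrightarrow> Q \<beta>"
  shows "Q \<beta>"
  using assms(1)
proof (induction "card {\<gamma>\<in>P. \<gamma> \<bullet> f < \<beta> \<bullet> f}" arbitrary: \<beta> rule: less_induct)
  case (less \<beta>)
  show ?case
  proof (rule step[OF less.prems])
    fix \<gamma> assume g: "\<gamma> \<in> P" "\<gamma> \<bullet> f < \<beta> \<bullet> f"
    have "{\<gamma>'\<in>P. \<gamma>' \<bullet> f < \<gamma> \<bullet> f} \<subset> {\<gamma>\<in>P. \<gamma> \<bullet> f < \<beta> \<bullet> f}"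
      using g by auto
    hence "card {\<gamma>'\<in>P. \<gamma>' \<bullet> f < \<gamma> \<bullet> f} < card {\<gamma>\<in>P. \<gamma> \<bullet> f < \<beta> \<bullet> f}"
      by (rule psubset_card_mono[rotated]) (use finP in auto)
    thus "Q \<gamma>" using less.hyps g by blast
  qed
qed

definition nncomb :: "'a \<Rightarrow> bool" where
  "nncomb \<beta> \<longleftrightarrow> (\<exists>c. (\<forall>\<delta>\<in>D. c \<delta> \<ge> 0) \<and> \<beta> = (\<Sum>\<delta>\<in>D. c \<delta> *\<^sub>R \<delta>))"

lemma nncomb_add: "nncomb a \<Longrightarrow> nncomb b \<Longrightarrow> nncomb (a + b)"
  unfolding nncomb_def
proof (elim exE conjE)
  fix c d assume "\<forall>\<delta>\<in>D. 0 \<le> c \<delta>" "a = (\<Sum>\<delta>\<in>D. c \<delta> *\<^sub>R \<delta>)" "\<forall>\<delta>\<in>D. 0 \<le> d \<delta>" "b = (\<Sum>\<delta>\<in>D. d \<delta> *\<^sub>R \<delta>)"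
  thus "\<exists>e. (\<forall>\<delta>\<in>D. 0 \<le> e \<delta>) \<and> a + b = (\<Sum>\<delta>\<in>D. e \<delta> *\<^sub>R \<delta>)"
    by (intro exI[of _ "\<lambda>\<delta>. c \<delta> + d \<delta>"]) (simp add: scaleR_add_left sum.distrib)
qed

lemma nncomb_D: assumes "\<alpha> \<in> D" shows "nncomb \<alpha>"
proof -
  have "(\<Sum>\<delta>\<in>D. (if \<delta> = \<alpha> then 1 else 0) *\<^sub>R \<delta>) = (\<Sum>\<delta>\<in>D. if \<delta> = \<alpha> then \<alpha> else 0)"
    by (rule sum.cong) auto
  also have "\<dots> = \<alpha>" using assms finD by simp
  finally show ?thesis unfolding nncomb_def
    by (intro exI[of _ "\<lambda>\<delta>. if \<delta> = \<alpha> then 1 else 0"]) simp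
qed

lemma P_nncomb: "\<beta> \<in> P \<Longrightarrow> nncomb \<beta>"
proof (induction rule: P_induct)
  case (step \<beta>)
  show ?case
  proof (cases "\<beta> \<in> D")
    case True thus ?thesis by (rule nncomb_D)
  next
    case False
    then obtain b1 b2 where b: "b1 \<in> P" "b2 \<in> P" "\<beta> = b1 + b2"
      using step(1) unfolding simple_roots_def by auto
    have "b1 \<bullet> f > 0" "b2 \<bullet> f > 0" using b(1,2) P_iff by auto
    hence "b1 \<bullet> f < \<beta> \<bullet> f" "b2 \<bullet> f < \<beta> \<bullet> f" using b(3) by (simp_all add: inner_add_left)
    thus ?thesis using step(2)[of b1] step(2)[of b2] b nncomb_add by metis
  qed
qed


lemma diff_root:
  assumes a: "\<alpha> \<in> \<Phi>" and b: "\<beta> \<in> \<Phi>" and pos: "\<alpha> \<bullet> \<beta> > 0" and ne: "\<alpha> \<noteq> \<beta>"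
  shows "\<alpha> - \<beta> \<in> \<Phi>"
proof -
  have a0: "\<alpha> \<noteq> 0" and b0: "\<beta> \<noteq> 0" using nz a b by auto
  have na: "norm \<alpha> > 0" using a0 by simp
  have le: "\<bar>\<alpha> \<bullet> \<beta>\<bar> \<le> norm \<alpha> * norm \<beta>" by (rule Cauchy_Schwarz_ineq2)
  have neq: "\<bar>\<alpha> \<bullet> \<beta>\<bar> \<noteq> norm \<alpha> * norm \<beta>"
  proof
    assume "\<bar>\<alpha> \<bullet> \<beta>\<bar> = norm \<alpha> * norm \<beta>"
    hence "norm \<alpha> *\<^sub>R \<beta> = norm \<beta> *\<^sub>R \<alpha> \<or> norm \<alpha> *\<^sub>R \<beta> = - norm \<beta> *\<^sub>R \<alpha>"
      using norm_cauchy_schwarz_abs_eq by blast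
    thus False
    proof
      assume h: "norm \<alpha> *\<^sub>R \<beta> = norm \<beta> *\<^sub>R \<alpha>"
      have "\<beta> = inverse (norm \<alpha>) *\<^sub>R (norm \<alpha> *\<^sub>R \<beta>)" using na by simp
      also have "\<dots> = (norm \<beta> / norm \<alpha>) *\<^sub>R \<alpha>" unfolding h by (simp add: divide_inverse_commute)
      finally have hb: "\<beta> = (norm \<beta> / norm \<alpha>) *\<^sub>R \<alpha>" .
      hence "norm \<beta> / norm \<alpha> = 1 \<or> norm \<beta> / norm \<alpha> = -1" using reduced[OF a] b by metis
      moreover have "norm \<beta> / norm \<alpha> > 0" using na b0 by simp
      ultimately have c1: "norm \<beta> / norm \<alpha> = 1" by linarith
      have "\<beta> = 1 *\<^sub>R \<alpha>" using hb by (simp only: c1)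
      hence "\<beta> = \<alpha>" by simp
      thus False using ne by simp
    next
      assume h: "norm \<alpha> *\<^sub>R \<beta> = - norm \<beta> *\<^sub>R \<alpha>"
      have "\<beta> = inverse (norm \<alpha>) *\<^sub>R (norm \<alpha> *\<^sub>R \<beta>)" using na by simp
      also have "\<dots> = (- norm \<beta> / norm \<alpha>) *\<^sub>R \<alpha>" unfolding h by (simp add: divide_inverse_commute)
      finally have hb: "\<beta> = (- norm \<beta> / norm \<alpha>) *\<^sub>R \<alpha>" .
      hence "- norm \<beta> / norm \<alpha> = 1 \<or> - norm \<beta> / norm \<alpha> = -1" using reduced[OF a] b by metis
      moreover have "- norm \<beta> / norm \<alpha> < 0" using na b0 by simp
      ultimately have c1: "- norm \<beta> / norm \<alpha> = -1" by linarith
      have "\<beta> = (-1) *\<^sub>R \<alpha>" using hb by (simp only: c1)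
      hence "\<beta> = -\<alpha>" by simp
      hence "\<alpha> \<bullet> \<beta> < 0" using a0 by simp
      thus False using pos by simp
    qed
  qed
  have lt: "\<bar>\<alpha> \<bullet> \<beta>\<bar> < norm \<alpha> * norm \<beta>" using le neq by simp
  have "\<bar>\<alpha> \<bullet> \<beta>\<bar>^2 < (norm \<alpha> * norm \<beta>)^2"
    by (rule power_strict_mono[OF lt]) auto
  hence sq: "(\<alpha> \<bullet> \<beta>)^2 < (\<alpha> \<bullet> \<alpha>) * (\<beta> \<bullet> \<beta>)"
    by (simp add: power_mult_distrib power2_norm_eq_inner)
  have aa: "\<alpha> \<bullet> \<alpha> > 0" and bb: "\<beta> \<bullet> \<beta> > 0" using a0 b0 by auto
  define n where "n = 2 * (\<alpha> \<bullet> \<beta>) / (\<beta> \<bullet> \<beta>)"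
  define m where "m = 2 * (\<beta> \<bullet> \<alpha>) / (\<alpha> \<bullet> \<alpha>)"
  have nI: "n \<in> \<int>" unfolding n_def using cartan[OF b a] .
  have mI: "m \<in> \<int>" unfolding m_def using cartan[OF a b] .
  have np: "n > 0" unfolding n_def using pos bb by simp
  have mp: "m > 0" unfolding m_def using pos aa by (simp add: inner_commute)
  have "n * m = 4 * (\<alpha> \<bullet> \<beta>)^2 / ((\<alpha> \<bullet> \<alpha>) * (\<beta> \<bullet> \<beta>))"
    unfolding n_def m_def by (simp add: inner_commute power2_eq_square field_simps)
  also have "\<dots> < 4" using sq aa bb by (simp add: field_simps)
  finally have nm: "n * m < 4" .
  obtain N where N: "n = of_int N" using nI Ints_cases by blast
  obtain M where M: "m = of_int M" using mI Ints_cases by blast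
  have N1: "N \<ge> 1" using np N by simp
  have M1: "M \<ge> 1" using mp M by simp
  have NM: "N * M < 4" using nm N M by (metis of_int_less_iff of_int_mult of_int_numeral)
  have "N = 1 \<or> M = 1"
  proof (rule ccontr)
    assume "\<not> (N = 1 \<or> M = 1)"
    hence "N \<ge> 2" "M \<ge> 2" using N1 M1 by auto
    hence "N * M \<ge> 2 * 2" by (intro mult_mono) auto
    thus False using NM by simp
  qed
  thus ?thesis
  proof
    assume "N = 1"
    hence "n = 1" using N by simp
    moreover have "refl \<beta> \<alpha> = \<alpha> - n *\<^sub>R \<beta>" unfolding refl_def n_def by simp
    ultimately have "refl \<beta> \<alpha> = \<alpha> - \<beta>" by simp
    thus ?thesis using refl_mem[OF b a] by simp
  next
    assume "M = 1"
    hence "m = 1" using M by simp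
    moreover have "refl \<alpha> \<beta> = \<beta> - m *\<^sub>R \<alpha>" unfolding refl_def m_def by simp
    ultimately have "refl \<alpha> \<beta> = \<beta> - \<alpha>" by simp
    hence "\<beta> - \<alpha> \<in> \<Phi>" using refl_mem[OF a b] by simp
    from neg_mem[OF this] show ?thesis by simp
  qed
qed

lemma simple_obtuse:
  assumes a: "\<alpha> \<in> D" and d: "\<delta> \<in> D" and ne: "\<alpha> \<noteq> \<delta>"
  shows "\<alpha> \<bullet> \<delta> \<le> 0"
proof (rule ccontr)
  assume "\<not> \<alpha> \<bullet> \<delta> \<le> 0"
  hence "\<alpha> - \<delta> \<in> \<Phi>" using diff_root[OF D_Phi[OF a] D_Phi[OF d]] ne by simp
  hence c: "\<alpha> - \<delta> \<in> P \<or> -(\<alpha> - \<delta>) \<in> P" by (rule root_cases)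
  have aP: "\<alpha> \<in> P" and dP: "\<delta> \<in> P" using a d D_P by auto
  show False using c
  proof
    assume "\<alpha> - \<delta> \<in> P"
    moreover have "\<alpha> = (\<alpha> - \<delta>) + \<delta>" by simp
    ultimately show False using a dP unfolding simple_roots_def by blast
  next
    assume "-(\<alpha> - \<delta>) \<in> P"
    moreover have "\<delta> = -(\<alpha> - \<delta>) + \<alpha>" by simp
    ultimately show False using d aP unfolding simple_roots_def by blast
  qed
qed

end

context RS begin


lemma key:
  assumes a: "\<alpha> \<in> D" and b: "\<beta> \<in> P" and ne: "\<beta> \<noteq> \<alpha>"
  shows "refl \<alpha> \<beta> \<in> P"
proof (rule ccontr)
  assume nP: "refl \<alpha> \<beta> \<notin> P"
  have aP: "\<alpha> \<in> P" using D_P[OF a] .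
  have aPhi: "\<alpha> \<in> \<Phi>" and bPhi: "\<beta> \<in> \<Phi>" using aP b P_iff by auto
  have af: "\<alpha> \<bullet> f > 0" and bf: "\<beta> \<bullet> f > 0" using aP b P_iff by auto
  define k where "k = 2 * (\<beta> \<bullet> \<alpha>) / (\<alpha> \<bullet> \<alpha>)"
  have g: "refl \<alpha> \<beta> = \<beta> - k *\<^sub>R \<alpha>" unfolding refl_def k_def ..
  have gP: "-(\<beta> - k *\<^sub>R \<alpha>) \<in> P" using root_cases[OF refl_mem[OF aPhi bPhi]] nP g by simp
  hence "(-(\<beta> - k *\<^sub>R \<alpha>)) \<bullet> f > 0" using P_iff by blast
  hence gf: "(\<beta> - k *\<^sub>R \<alpha>) \<bullet> f < 0" by (simp only: inner_minus_left)
  have kpos: "k > 0"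
  proof (rule ccontr)
    assume "\<not> k > 0"
    hence "k * (\<alpha> \<bullet> f) \<le> 0" using af by (simp add: mult_nonpos_nonneg)
    thus False using gf bf by (simp add: inner_diff_left)
  qed
  obtain c where c: "\<forall>\<delta>\<in>D. c \<delta> \<ge> 0" "\<beta> = (\<Sum>\<delta>\<in>D. c \<delta> *\<^sub>R \<delta>)"
    using P_nncomb[OF b] unfolding nncomb_def by blast
  obtain d where d: "\<forall>\<delta>\<in>D. d \<delta> \<ge> 0" "-(\<beta> - k *\<^sub>R \<alpha>) = (\<Sum>\<delta>\<in>D. d \<delta> *\<^sub>R \<delta>)"
    using P_nncomb[OF gP] unfolding nncomb_def by blast
  define e where "e \<delta> = c \<delta> + d \<delta>" for \<delta>
  have e0: "\<forall>\<delta>\<in>D. e \<delta> \<ge> 0" using c d unfolding e_def by auto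
  have "k *\<^sub>R \<alpha> = \<beta> + -(\<beta> - k *\<^sub>R \<alpha>)" by simp
  also have "\<dots> = (\<Sum>\<delta>\<in>D. e \<delta> *\<^sub>R \<delta>)" unfolding c(2)[symmetric] d(2)[symmetric]
    by (simp add: e_def scaleR_add_left sum.distrib c(2)[symmetric] d(2)[symmetric])
  also have "\<dots> = e \<alpha> *\<^sub>R \<alpha> + (\<Sum>\<delta>\<in>D-{\<alpha>}. e \<delta> *\<^sub>R \<delta>)"
    by (rule sum.remove[OF finD a])
  finally have eq: "k *\<^sub>R \<alpha> = e \<alpha> *\<^sub>R \<alpha> + (\<Sum>\<delta>\<in>D-{\<alpha>}. e \<delta> *\<^sub>R \<delta>)" .
  define v where "v = (\<Sum>\<delta>\<in>D-{\<alpha>}. e \<delta> *\<^sub>R \<delta>)"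
  have vdef: "v = (k - e \<alpha>) *\<^sub>R \<alpha>" using eq unfolding v_def by (simp add: scaleR_diff_left)
  have vf: "v \<bullet> f = (\<Sum>\<delta>\<in>D-{\<alpha>}. e \<delta> * (\<delta> \<bullet> f))" unfolding v_def by (simp add: inner_sum_left)
  have terms: "\<forall>\<delta>\<in>D-{\<alpha>}. e \<delta> * (\<delta> \<bullet> f) \<ge> 0"
  proof
    fix \<delta> assume "\<delta> \<in> D-{\<alpha>}"
    hence "e \<delta> \<ge> 0" "\<delta> \<bullet> f > 0" using e0 D_P P_iff by auto
    thus "e \<delta> * (\<delta> \<bullet> f) \<ge> 0" by simp
  qed
  have vf0: "v \<bullet> f \<ge> 0" unfolding vf using terms by (intro sum_nonneg) auto
  have "v \<bullet> f = 0"
  proof (cases "k - e \<alpha> \<le> 0")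
    case True
    hence "v \<bullet> f \<le> 0" unfolding vdef using af by (simp add: mult_nonpos_nonneg)
    thus ?thesis using vf0 by simp
  next
    case False
    have "v \<bullet> v = (k - e \<alpha>) * (\<alpha> \<bullet> v)" by (subst (1) vdef) simp
    also have "\<alpha> \<bullet> v = (\<Sum>\<delta>\<in>D-{\<alpha>}. e \<delta> * (\<alpha> \<bullet> \<delta>))" unfolding v_def by (simp add: inner_sum_right)
    also have "\<dots> \<le> 0" using e0 simple_obtuse[OF a] by (intro sum_nonpos) (auto intro: mult_nonneg_nonpos)
    finally have "v \<bullet> v \<le> 0" using False by (simp add: mult_nonneg_nonpos)
    hence "v = 0" by (metis inner_gt_zero_iff not_le)
    thus ?thesis by simp
  qed
  hence "\<forall>\<delta>\<in>D-{\<alpha>}. e \<delta> * (\<delta> \<bullet> f) = 0"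
    using terms sum_nonneg_eq_0_iff[of "D-{\<alpha>}" "\<lambda>\<delta>. e \<delta> * (\<delta> \<bullet> f)"] finD vf by auto
  hence ez: "\<forall>\<delta>\<in>D-{\<alpha>}. e \<delta> = 0" using D_P P_iff by force
  hence cz: "\<forall>\<delta>\<in>D-{\<alpha>}. c \<delta> = 0" using c d unfolding e_def by force
  have "\<beta> = c \<alpha> *\<^sub>R \<alpha> + (\<Sum>\<delta>\<in>D-{\<alpha>}. c \<delta> *\<^sub>R \<delta>)"
    unfolding c(2) by (rule sum.remove[OF finD a])
  also have "(\<Sum>\<delta>\<in>D-{\<alpha>}. c \<delta> *\<^sub>R \<delta>) = 0" using cz by simp
  finally have bc: "\<beta> = c \<alpha> *\<^sub>R \<alpha>" by simp
  hence "c \<alpha> = 1 \<or> c \<alpha> = -1" using reduced[OF aPhi] bPhi by metis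
  moreover have "c \<alpha> \<noteq> -1"
  proof
    assume "c \<alpha> = -1"
    hence "\<beta> = - \<alpha>" using bc by simp
    thus False using af bf by (simp add: inner_minus_left)
  qed
  ultimately have "\<beta> = \<alpha>" using bc by simp
  thus False using ne by simp
qed


abbreviation "Sr \<equiv> simple_refls \<Phi> f"
abbreviation "W \<equiv> weyl \<Phi> f"
abbreviation "L \<equiv> len \<Phi> f"

lemma wprod_Nil[simp]: "wprod [] = id" by (simp add: wprod_def)
lemma wprod_Cons[simp]: "wprod (a # l) = a \<circ> wprod l" by (simp add: wprod_def)
lemma wprod_append: "wprod (l1 @ l2) = wprod l1 \<circ> wprod l2"
  by (induction l1) (auto simp: fun_eq_iff)

lemma Sr_cases: "s \<in> Sr \<Longrightarrow> \<exists>\<alpha>\<in>D. s = refl \<alpha>" unfolding simple_refls_def by auto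

lemma Sr_inv: assumes "s \<in> Sr" shows "s (s v) = v"
proof -
  obtain \<alpha> where "\<alpha> \<in> D" "s = refl \<alpha>" using Sr_cases[OF assms] by blast
  thus ?thesis using refl_refl nz D_Phi by metis
qed

lemma Sr_inv': "s \<in> Sr \<Longrightarrow> s \<circ> s = id" using Sr_inv by (auto simp: fun_eq_iff)

lemma Sr_inv'': "s \<in> Sr \<Longrightarrow> s \<circ> (s \<circ> g) = g" using Sr_inv by (auto simp: fun_eq_iff)

lemma W_wprod: "set l \<subseteq> Sr \<Longrightarrow> wprod l \<in> W" unfolding weyl_def by auto
lemma W_cases: "y \<in> W \<Longrightarrow> \<exists>l. set l \<subseteq> Sr \<and> wprod l = y" unfolding weyl_def by auto
lemma W_comp: assumes "y \<in> W" "z \<in> W" shows "y \<circ> z \<in> W"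
proof -
  obtain l1 l2 where "set l1 \<subseteq> Sr" "wprod l1 = y" "set l2 \<subseteq> Sr" "wprod l2 = z"
    using W_cases assms by metis
  moreover have "wprod (l1 @ l2) \<in> W" by (rule W_wprod) (use calculation in auto)
  ultimately show ?thesis by (simp add: wprod_append)
qed
lemma Sr_W: "s \<in> Sr \<Longrightarrow> s \<in> W" using W_wprod[of "[s]"] by simp
lemma id_W: "id \<in> W" using W_wprod[of "[]"] by simp

lemma Sr_comp_W: "s \<in> Sr \<Longrightarrow> y \<in> W \<Longrightarrow> s \<circ> y \<in> W" using W_comp Sr_W by blast

lemma Sr_props: assumes "s \<in> Sr"
  shows "linear s" "\<And>u v. s u \<bullet> s v = u \<bullet> v" "\<And>\<beta>. \<beta> \<in> \<Phi> \<Longrightarrow> s \<beta> \<in> \<Phi>"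
proof -
  obtain \<alpha> where a: "\<alpha> \<in> D" "s = refl \<alpha>" using Sr_cases[OF assms] by blast
  show "linear s" using a linear_refl by simp
  show "\<And>u v. s u \<bullet> s v = u \<bullet> v" using a refl_inner nz D_Phi by metis
  show "\<And>\<beta>. \<beta> \<in> \<Phi> \<Longrightarrow> s \<beta> \<in> \<Phi>" using a refl_mem D_Phi by metis
qed

lemma wprod_props: assumes "set l \<subseteq> Sr"
  shows "linear (wprod l) \<and> (\<forall>u v. wprod l u \<bullet> wprod l v = u \<bullet> v) \<and> (\<forall>\<beta>\<in>\<Phi>. wprod l \<beta> \<in> \<Phi>)"
  using assms
proof (induction l)
  case Nil thus ?case by (auto intro!: linearI)
next
  case (Cons a l)
  hence a: "a \<in> Sr" and IH: "linear (wprod l) \<and> (\<forall>u v. wprod l u \<bullet> wprod l v = u \<bullet> v) \<and> (\<forall>\<beta>\<in>\<Phi>. wprod l \<beta> \<in> \<Phi>)" by auto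
  have "linear (a \<circ> wprod l)" by (rule linear_compose) (use IH Sr_props(1)[OF a] in auto)
  thus ?case using Sr_props[OF a] IH by (simp add: o_def)
qed

lemma W_linear: "y \<in> W \<Longrightarrow> linear y" using W_cases wprod_props by blast
lemma W_orth: "y \<in> W \<Longrightarrow> y u \<bullet> y v = u \<bullet> v" using W_cases wprod_props by metis
lemma W_root: "y \<in> W \<Longrightarrow> \<beta> \<in> \<Phi> \<Longrightarrow> y \<beta> \<in> \<Phi>" using W_cases wprod_props by metis
lemma W_neg: "y \<in> W \<Longrightarrow> y (- v) = - y v" using W_linear linear_neg by blast
lemma W_diff: "y \<in> W \<Longrightarrow> y (u - v) = y u - y v" using W_linear linear_diff by blast
lemma W_scale: "y \<in> W \<Longrightarrow> y (c *\<^sub>R v) = c *\<^sub>R y v" using W_linear linear_scale by blast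

lemma wprod_rev: "set l \<subseteq> Sr \<Longrightarrow> wprod l \<circ> wprod (rev l) = id \<and> wprod (rev l) \<circ> wprod l = id"
proof (induction l)
  case Nil thus ?case by simp
next
  case (Cons a l)
  have a: "a \<in> Sr" using Cons.prems by simp
  have IH: "wprod l \<circ> wprod (rev l) = id \<and> wprod (rev l) \<circ> wprod l = id" by (rule Cons.IH) (use Cons.prems in simp)
  have e1: "wprod (a # l) \<circ> wprod (rev (a # l)) = a \<circ> (wprod l \<circ> wprod (rev l)) \<circ> a"
    by (simp add: wprod_append comp_assoc)
  have e2: "wprod (rev (a # l)) \<circ> wprod (a # l) = wprod (rev l) \<circ> (a \<circ> a) \<circ> wprod l"
    by (simp add: wprod_append comp_assoc)
  show ?case unfolding e1 e2 using IH Sr_inv'[OF a] by simp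
qed

lemma W_inv: assumes "y \<in> W" shows "\<exists>z\<in>W. y \<circ> z = id \<and> z \<circ> y = id"
proof -
  obtain l where "set l \<subseteq> Sr" "wprod l = y" using W_cases assms by blast
  thus ?thesis using wprod_rev[of l] W_wprod[of "rev l"] by auto
qed

lemma conj: assumes "y \<in> W" shows "y \<circ> refl a = refl (y a) \<circ> y"
proof
  fix v
  show "(y \<circ> refl a) v = (refl (y a) \<circ> y) v"
    unfolding refl_def comp_def using W_orth[OF assms] W_diff[OF assms] W_scale[OF assms] by simp
qed

lemma len_word: assumes "y \<in> W" shows "\<exists>l. set l \<subseteq> Sr \<and> length l = L y \<and> wprod l = y"
proof -
  obtain l where "set l \<subseteq> Sr" "wprod l = y" using W_cases assms by blast
  hence ex: "\<exists>n l. set l \<subseteq> Sr \<and> length l = n \<and> wprod l = y" by blast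
  show ?thesis unfolding len_def by (rule LeastI_ex) (use ex in blast)
qed

lemma len_le: "set l \<subseteq> Sr \<Longrightarrow> L (wprod l) \<le> length l"
  unfolding len_def by (rule Least_le) blast

lemma len_comp_le: assumes "s \<in> Sr" "y \<in> W" shows "L (s \<circ> y) \<le> L y + 1"
proof -
  obtain l where l: "set l \<subseteq> Sr" "length l = L y" "wprod l = y" using len_word[OF assms(2)] by blast
  have "L (wprod (s # l)) \<le> length (s # l)" by (rule len_le) (use l assms in auto)
  thus ?thesis using l by simp
qed

lemma len_comp_ge: assumes "s \<in> Sr" "y \<in> W" shows "L y \<le> L (s \<circ> y) + 1"
proof -
  have e: "s \<circ> (s \<circ> y) = y" using Sr_inv''[OF assms(1)] .
  show ?thesis using len_comp_le[OF assms(1) Sr_comp_W[OF assms]] unfolding e by simp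
qed



lemma neg_notP: "\<beta> \<in> P \<Longrightarrow> -\<beta> \<notin> P"
  using P_iff by (auto simp: inner_minus_left)

lemma W_notP_negP: "y \<in> W \<Longrightarrow> \<gamma> \<in> \<Phi> \<Longrightarrow> y \<gamma> \<notin> P \<Longrightarrow> - y \<gamma> \<in> P"
  using root_cases W_root by blast

lemma exists_pos_inner:
  assumes g: "\<gamma> \<in> P" shows "\<exists>\<delta>\<in>D. \<gamma> \<bullet> \<delta> > 0"
proof (rule ccontr)
  assume "\<not> (\<exists>\<delta>\<in>D. \<gamma> \<bullet> \<delta> > 0)"
  hence le: "\<forall>\<delta>\<in>D. \<gamma> \<bullet> \<delta> \<le> 0" by auto
  obtain c where c: "\<forall>\<delta>\<in>D. c \<delta> \<ge> 0" "\<gamma> = (\<Sum>\<delta>\<in>D. c \<delta> *\<^sub>R \<delta>)"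
    using P_nncomb[OF g] unfolding nncomb_def by blast
  have "\<gamma> \<bullet> \<gamma> = (\<Sum>\<delta>\<in>D. c \<delta> * (\<gamma> \<bullet> \<delta>))" by (subst (2) c(2)) (simp add: inner_sum_right)
  also have "\<dots> \<le> 0" using c(1) le by (intro sum_nonpos) (auto intro: mult_nonneg_nonpos)
  finally have "\<gamma> = 0" by (metis inner_gt_zero_iff not_le)
  thus False using g P_iff nz by auto
qed

lemma conj_simple: assumes g: "\<gamma> \<in> P" shows "\<exists>u\<in>W. \<exists>\<delta>\<in>D. \<gamma> = u \<delta>"
  using g
proof (induction rule: P_induct)
  case (step \<gamma>)
  show ?case
  proof (cases "\<gamma> \<in> D")
    case True
    have "\<gamma> = id \<gamma>" by simp
    thus ?thesis using id_W True by blast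
  next
    case False
    obtain \<delta> where d: "\<delta> \<in> D" "\<gamma> \<bullet> \<delta> > 0" using exists_pos_inner[OF step(1)] by blast
    have ne: "\<gamma> \<noteq> \<delta>" using False d by auto
    have g'P: "refl \<delta> \<gamma> \<in> P" by (rule key[OF d(1) step(1) ne])
    have dP: "\<delta> \<in> P" using D_P d by auto
    have dd: "\<delta> \<bullet> \<delta> > 0" using nz D_Phi d by auto
    have "refl \<delta> \<gamma> \<bullet> f = \<gamma> \<bullet> f - (2 * (\<gamma> \<bullet> \<delta>) / (\<delta> \<bullet> \<delta>)) * (\<delta> \<bullet> f)"
      unfolding refl_def by (simp add: inner_diff_left)
    moreover have "(2 * (\<gamma> \<bullet> \<delta>) / (\<delta> \<bullet> \<delta>)) * (\<delta> \<bullet> f) > 0"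
    proof -
      have "\<delta> \<bullet> f > 0" using dP P_iff by blast
      moreover have "2 * (\<gamma> \<bullet> \<delta>) / (\<delta> \<bullet> \<delta>) > 0" using d(2) dd by simp
      ultimately show ?thesis by (rule mult_pos_pos[rotated])
    qed
    ultimately have "refl \<delta> \<gamma> \<bullet> f < \<gamma> \<bullet> f" by simp
    then obtain u \<delta>' where u: "u \<in> W" "\<delta>' \<in> D" "refl \<delta> \<gamma> = u \<delta>'" using step(2)[OF g'P] by blast
    have "\<delta> \<noteq> 0" using nz D_Phi d(1) by blast
    hence "\<gamma> = refl \<delta> (refl \<delta> \<gamma>)" using refl_refl by metis
    also have "\<dots> = (refl \<delta> \<circ> u) \<delta>'" using u by simp
    finally have "\<gamma> = (refl \<delta> \<circ> u) \<delta>'" .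
    moreover have "refl \<delta> \<in> Sr" using d(1) unfolding simple_refls_def by blast
    hence "refl \<delta> \<circ> u \<in> W" using Sr_comp_W[OF _ u(1)] by blast
    ultimately show ?thesis using u by blast
  qed
qed

lemma refl_W: assumes g: "\<gamma> \<in> \<Phi>" shows "refl \<gamma> \<in> W"
proof -
  obtain g' where g': "g' \<in> P" "refl \<gamma> = refl g'"
  proof (cases "\<gamma> \<in> P")
    case True thus ?thesis using that by blast
  next
    case False
    hence "-\<gamma> \<in> P" using root_cases[OF g] by blast
    thus ?thesis using that[of "-\<gamma>"] refl_neg[of \<gamma>] by simp
  qed
  obtain u \<delta> where u: "u \<in> W" "\<delta> \<in> D" "g' = u \<delta>" using conj_simple[OF g'(1)] by blast
  obtain z where z: "z \<in> W" "u \<circ> z = id" using W_inv[OF u(1)] by blast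
  have "u \<circ> refl \<delta> \<circ> z = refl (u \<delta>) \<circ> u \<circ> z" by (simp only: conj[OF u(1)])
  also have "\<dots> = refl (u \<delta>) \<circ> (u \<circ> z)" by (simp only: comp_assoc)
  also have "\<dots> = refl (u \<delta>)" by (simp only: z(2)) simp
  finally have e: "refl \<gamma> = u \<circ> refl \<delta> \<circ> z" using u(3) g'(2) by simp
  have "refl \<delta> \<in> Sr" using u(2) unfolding simple_refls_def by blast
  hence "refl \<delta> \<in> W" by (rule Sr_W)
  hence "u \<circ> refl \<delta> \<in> W" using W_comp u(1) by blast
  hence "u \<circ> refl \<delta> \<circ> z \<in> W" using W_comp z(1) by blast
  thus ?thesis using e by simp
qed

lemma omit_Cons_Suc: assumes "i \<ge> 1" shows "omit (Suc i) (a # l) = a # omit i l"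
proof -
  obtain j where "i = Suc j" using assms by (cases i) auto
  thus ?thesis unfolding omit_def by simp
qed

lemma omit_1: "omit 1 (a # l) = l" unfolding omit_def by simp

lemma length_omit: assumes "i \<in> {1..length l}" shows "length (omit i l) = length l - 1"
proof -
  have "1 \<le> i" "i \<le> length l" using assms by auto
  thus ?thesis unfolding omit_def by simp
qed

lemma set_omit: "set (omit i l) \<subseteq> set l"
  unfolding omit_def using set_take_subset[of "i-1" l] set_drop_subset[of i l] by simp

lemma strong_exchange:
  assumes "set l \<subseteq> Sr" "\<gamma> \<in> P" "wprod l \<gamma> \<notin> P"
  shows "\<exists>i\<in>{1..length l}. wprod l \<circ> refl \<gamma> = wprod (omit i l)"
  using assms(1,3)
proof (induction l)
  case Nil thus ?case using assms(2) by simp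
next
  case (Cons a l)
  have a: "a \<in> Sr" and l: "set l \<subseteq> Sr" using Cons.prems by auto
  obtain \<alpha> where al: "\<alpha> \<in> D" "a = refl \<alpha>" using Sr_cases[OF a] by blast
  show ?case
  proof (cases "wprod l \<gamma> \<in> P")
    case False
    then obtain i where i: "i \<in> {1..length l}" "wprod l \<circ> refl \<gamma> = wprod (omit i l)" using Cons.IH l by blast
    have "wprod (a # l) \<circ> refl \<gamma> = wprod (omit (Suc i) (a # l))"
      using i omit_Cons_Suc[of i a l] by (simp add: comp_assoc)
    moreover have "Suc i \<in> {1..length (a # l)}" using i by simp
    ultimately show ?thesis by blast
  next
    case True
    have "a (wprod l \<gamma>) \<notin> P" using Cons.prems by simp
    hence eq: "wprod l \<gamma> = \<alpha>" using key[OF al(1) True] al by blast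
    have "wprod l \<circ> refl \<gamma> = refl (wprod l \<gamma>) \<circ> wprod l" by (rule conj[OF W_wprod[OF l]])
    hence "wprod (a # l) \<circ> refl \<gamma> = a \<circ> (a \<circ> wprod l)" using eq al by (simp add: comp_assoc)
    also have "\<dots> = wprod l" using Sr_inv''[OF a] .
    also have "\<dots> = wprod (omit 1 (a # l))" by (simp only: omit_1)
    finally have "wprod (a # l) \<circ> refl \<gamma> = wprod (omit 1 (a # l))" .
    moreover have "(1::nat) \<in> {1..length (a # l)}" by simp
    ultimately show ?thesis by blast
  qed
qed

lemma len_down: assumes y: "y \<in> W" and g: "\<gamma> \<in> P" and n: "y \<gamma> \<notin> P"
  shows "L (y \<circ> refl \<gamma>) < L y"
proof -
  obtain l where l: "set l \<subseteq> Sr" "length l = L y" "wprod l = y" using len_word[OF y] by blast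
  have n': "wprod l \<gamma> \<notin> P" using n l(3) by simp
  obtain i where i: "i \<in> {1..length l}" "wprod l \<circ> refl \<gamma> = wprod (omit i l)"
    using strong_exchange[OF l(1) g n'] by blast
  have so: "set (omit i l) \<subseteq> Sr" using set_omit[of i l] l(1) by (rule order_trans)
  have "L (wprod (omit i l)) \<le> length (omit i l)" by (rule len_le[OF so])
  also have "\<dots> = length l - 1" using length_omit[OF i(1)] .
  finally have le: "L (wprod (omit i l)) \<le> length l - 1" .
  have e: "y \<circ> refl \<gamma> = wprod (omit i l)" using i(2) l(3) by simp
  have "length l \<ge> 1" using i(1) by simp
  thus ?thesis unfolding e using le l(2) by linarith
qed

lemma len_up: assumes y: "y \<in> W" and g: "\<gamma> \<in> P" and p: "y \<gamma> \<in> P"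
  shows "L y < L (y \<circ> refl \<gamma>)"
proof -
  have gPhi: "\<gamma> \<in> \<Phi>" using g P_iff by blast
  have g0: "\<gamma> \<noteq> 0" using nz gPhi by blast
  have y': "y \<circ> refl \<gamma> \<in> W" using W_comp[OF y refl_W[OF gPhi]] .
  have "(y \<circ> refl \<gamma>) \<gamma> = y (- \<gamma>)" using refl_self[OF g0] by simp
  also have "\<dots> = - y \<gamma>" using W_neg[OF y] .
  finally have "(y \<circ> refl \<gamma>) \<gamma> \<notin> P" using neg_notP[OF p] by simp
  from len_down[OF y' g this] have lt: "L (y \<circ> refl \<gamma> \<circ> refl \<gamma>) < L (y \<circ> refl \<gamma>)" .
  have "y \<circ> refl \<gamma> \<circ> refl \<gamma> = y \<circ> (refl \<gamma> \<circ> refl \<gamma>)" by (simp only: comp_assoc)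
  also have "\<dots> = y" by (simp only: refl_comp_refl[OF g0]) simp
  finally show ?thesis using lt by simp
qed

lemma len_neq: assumes y: "y \<in> W" and g: "\<gamma> \<in> P"
  shows "L (y \<circ> refl \<gamma>) < L y \<longleftrightarrow> y \<gamma> \<notin> P"
proof
  assume "L (y \<circ> refl \<gamma>) < L y"
  thus "y \<gamma> \<notin> P" using len_up[OF y g] by (meson less_asym)
next
  assume "y \<gamma> \<notin> P" thus "L (y \<circ> refl \<gamma>) < L y" by (rule len_down[OF y g])
qed



abbreviation "le \<equiv> bruhat_le \<Phi> f"

lemma step_iff: "(y, z) \<in> bruhat_step \<Phi> f \<longleftrightarrow> (\<exists>\<gamma>. y \<in> W \<and> \<gamma> \<in> P \<and> z = y \<circ> refl \<gamma> \<and> L y < L (y \<circ> refl \<gamma>))"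
  unfolding bruhat_step_def by blast

lemma le_step: assumes "y \<in> W" "\<gamma> \<in> P" "L y < L (y \<circ> refl \<gamma>)" shows "le y (y \<circ> refl \<gamma>)"
proof -
  have "(y, y \<circ> refl \<gamma>) \<in> bruhat_step \<Phi> f" using assms step_iff by blast
  thus ?thesis unfolding bruhat_le_def using assms(1) by blast
qed

lemma le_refl: "x \<in> W \<Longrightarrow> le x x" unfolding bruhat_le_def by blast

lemma le_trans: "le x y \<Longrightarrow> le y z \<Longrightarrow> le x z" unfolding bruhat_le_def by (meson rtrancl_trans)

lemma le_chain: assumes "(x, w) \<in> (bruhat_step \<Phi> f)\<^sup>*" "x \<in> W"
  shows "w \<in> W \<and> L x \<le> L w \<and> (x \<noteq> w \<longrightarrow> L x < L w)"
  using assms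
proof (induction rule: rtrancl_induct)
  case base thus ?case by simp
next
  case (step y z)
  obtain \<gamma> where g: "y \<in> W" "\<gamma> \<in> P" "z = y \<circ> refl \<gamma>" "L y < L (y \<circ> refl \<gamma>)" using step(2) step_iff by blast
  have "refl \<gamma> \<in> W" using refl_W g(2) P_iff by blast
  hence zW: "z \<in> W" using W_comp g(1,3) by blast
  have lyz: "L y < L z" using g(3,4) by simp
  have "L x \<le> L y" using step.IH step.prems by blast
  hence "L x < L z" using lyz by linarith
  thus ?case using zW by simp
qed

lemma le_W: "le x w \<Longrightarrow> x \<in> W \<and> w \<in> W" unfolding bruhat_le_def using le_chain by blast
lemma le_len: "le x w \<Longrightarrow> L x \<le> L w" unfolding bruhat_le_def using le_chain by blast
lemma le_len_strict: "le x w \<Longrightarrow> x \<noteq> w \<Longrightarrow> L x < L w" unfolding bruhat_le_def using le_chain by blast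

lemma less_refl_iff: assumes u: "u \<in> W" and a: "\<alpha> \<in> P"
  shows "bruhat_less \<Phi> f (u \<circ> refl \<alpha>) u \<longleftrightarrow> L (u \<circ> refl \<alpha>) < L u"
proof
  assume "bruhat_less \<Phi> f (u \<circ> refl \<alpha>) u"
  thus "L (u \<circ> refl \<alpha>) < L u" unfolding bruhat_less_def using le_len_strict by blast
next
  assume lt: "L (u \<circ> refl \<alpha>) < L u"
  have aPhi: "\<alpha> \<in> \<Phi>" using a P_iff by blast
  have a0: "\<alpha> \<noteq> 0" using nz aPhi by blast
  have u': "u \<circ> refl \<alpha> \<in> W" using W_comp[OF u refl_W[OF aPhi]] .
  have e: "u \<circ> refl \<alpha> \<circ> refl \<alpha> = u" using refl_comp_refl[OF a0] by (simp add: comp_assoc)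
  have "le (u \<circ> refl \<alpha>) (u \<circ> refl \<alpha> \<circ> refl \<alpha>)" by (rule le_step[OF u' a]) (simp only: e lt)
  hence "le (u \<circ> refl \<alpha>) u" by (simp only: e)
  moreover have "u \<circ> refl \<alpha> \<noteq> u" using lt by auto
  ultimately show "bruhat_less \<Phi> f (u \<circ> refl \<alpha>) u" unfolding bruhat_less_def by blast
qed

lemma left_as_right: assumes s: "s \<in> Sr" and z: "z \<in> W" shows "\<exists>\<beta>\<in>P. s \<circ> z = z \<circ> refl \<beta>"
proof -
  obtain \<alpha> where a: "\<alpha> \<in> D" "s = refl \<alpha>" using Sr_cases[OF s] by blast
  obtain zi where zi: "zi \<in> W" "z \<circ> zi = id" using W_inv[OF z] by blast
  have b0: "zi \<alpha> \<in> \<Phi>" using W_root[OF zi(1) D_Phi[OF a(1)]] .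
  have "z (zi \<alpha>) = \<alpha>" using zi(2) by (metis comp_apply id_apply)
  hence e: "z \<circ> refl (zi \<alpha>) = s \<circ> z" using conj[OF z, of "zi \<alpha>"] a(2) by simp
  show ?thesis
  proof (cases "zi \<alpha> \<in> P")
    case True thus ?thesis using e by metis
  next
    case False
    hence "- zi \<alpha> \<in> P" using root_cases[OF b0] by blast
    thus ?thesis using e refl_neg[of "zi \<alpha>"] by metis
  qed
qed

lemma len_s_neq: assumes s: "s \<in> Sr" and z: "z \<in> W" shows "L (s \<circ> z) \<noteq> L z"
proof -
  obtain \<beta> where b: "\<beta> \<in> P" "s \<circ> z = z \<circ> refl \<beta>" using left_as_right[OF s z] by blast
  show ?thesis unfolding b(2) using len_down[OF z b(1)] len_up[OF z b(1)] by (cases "z \<beta> \<in> P") auto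
qed

lemma le_s_up: assumes s: "s \<in> Sr" and z: "z \<in> W" and lt: "L z < L (s \<circ> z)" shows "le z (s \<circ> z)"
proof -
  obtain \<beta> where b: "\<beta> \<in> P" "s \<circ> z = z \<circ> refl \<beta>" using left_as_right[OF s z] by blast
  show ?thesis unfolding b(2) by (rule le_step[OF z b(1)]) (use lt b(2) in simp)
qed

lemma le_s_down: assumes s: "s \<in> Sr" and z: "z \<in> W" and lt: "L (s \<circ> z) < L z" shows "le (s \<circ> z) z"
proof -
  have sz: "s \<circ> z \<in> W" using Sr_comp_W[OF s z] .
  have "le (s \<circ> z) (s \<circ> (s \<circ> z))" by (rule le_s_up[OF s sz]) (simp only: Sr_inv''[OF s] lt)
  thus ?thesis by (simp only: Sr_inv''[OF s])
qed

lemma step_dich: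
  assumes s: "s \<in> Sr" and x: "x \<in> W" and g: "\<gamma> \<in> P" and lt: "L x < L (x \<circ> refl \<gamma>)"
  shows "s \<circ> x = x \<circ> refl \<gamma> \<or> le (s \<circ> x) (s \<circ> (x \<circ> refl \<gamma>))"
proof -
  obtain \<alpha> where a: "\<alpha> \<in> D" "s = refl \<alpha>" using Sr_cases[OF s] by blast
  have xg: "x \<gamma> \<in> P" using len_down[OF x g] lt by (meson less_asym)
  show ?thesis
  proof (cases "s (x \<gamma>) \<in> P")
    case False
    hence "x \<gamma> = \<alpha>" using key[OF a(1) xg] a(2) by blast
    hence "x \<circ> refl \<gamma> = s \<circ> x" using conj[OF x, of \<gamma>] a(2) by simp
    thus ?thesis by simp
  next
    case True
    have sx: "s \<circ> x \<in> W" using Sr_comp_W[OF s x] .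
    have "(s \<circ> x) \<gamma> \<in> P" using True by simp
    hence "L (s \<circ> x) < L (s \<circ> x \<circ> refl \<gamma>)" using len_up[OF sx g] by blast
    hence "le (s \<circ> x) (s \<circ> x \<circ> refl \<gamma>)" by (rule le_step[OF sx g])
    thus ?thesis by (simp add: comp_assoc)
  qed
qed

definition mlo :: "('a \<Rightarrow> 'a) \<Rightarrow> ('a \<Rightarrow> 'a) \<Rightarrow> ('a \<Rightarrow> 'a)" where
  "mlo s z = (if L (s \<circ> z) < L z then s \<circ> z else z)"
definition mhi :: "('a \<Rightarrow> 'a) \<Rightarrow> ('a \<Rightarrow> 'a) \<Rightarrow> ('a \<Rightarrow> 'a)" where
  "mhi s z = (if L z < L (s \<circ> z) then s \<circ> z else z)"

lemma mlo_W: "s \<in> Sr \<Longrightarrow> z \<in> W \<Longrightarrow> mlo s z \<in> W" unfolding mlo_def using Sr_comp_W by auto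
lemma mhi_W: "s \<in> Sr \<Longrightarrow> z \<in> W \<Longrightarrow> mhi s z \<in> W" unfolding mhi_def using Sr_comp_W by auto

lemma lo_le: assumes s: "s \<in> Sr" and z: "z \<in> W" shows "le (mlo s z) z"
  unfolding mlo_def using le_s_down[OF s z] le_refl[OF z] by auto

lemma lo_le2: assumes s: "s \<in> Sr" and z: "z \<in> W" shows "le (mlo s z) (s \<circ> z)"
proof (cases "L (s \<circ> z) < L z")
  case True thus ?thesis unfolding mlo_def using le_refl Sr_comp_W[OF s z] by simp
next
  case False
  hence "L z < L (s \<circ> z)" using len_s_neq[OF s z] by linarith
  thus ?thesis unfolding mlo_def using False le_s_up[OF s z] by simp
qed

lemma hi_ge: assumes s: "s \<in> Sr" and z: "z \<in> W" shows "le z (mhi s z)"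
  unfolding mhi_def using le_s_up[OF s z] le_refl[OF z] by auto

lemma hi_ge2: assumes s: "s \<in> Sr" and z: "z \<in> W" shows "le (s \<circ> z) (mhi s z)"
proof (cases "L z < L (s \<circ> z)")
  case True thus ?thesis unfolding mhi_def using le_refl Sr_comp_W[OF s z] by simp
next
  case False
  hence "L (s \<circ> z) < L z" using len_s_neq[OF s z] by linarith
  thus ?thesis unfolding mhi_def using False le_s_down[OF s z] by simp
qed

lemma mlo_step:
  assumes s: "s \<in> Sr" and st: "(x, y) \<in> bruhat_step \<Phi> f"
  shows "le (mlo s x) (mlo s y)"
proof -
  obtain \<gamma> where g: "x \<in> W" "\<gamma> \<in> P" "y = x \<circ> refl \<gamma>" "L x < L (x \<circ> refl \<gamma>)" using st step_iff by blast
  have x: "x \<in> W" using g by blast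
  have y: "y \<in> W" using W_comp[OF x refl_W] g P_iff by blast
  have xy: "le x y" using le_step[OF x g(2) g(4)] g(3) by simp
  have lxy: "L x < L y" using g by simp
  from step_dich[OF s x g(2) g(4)] show ?thesis
  proof
    assume A: "s \<circ> x = x \<circ> refl \<gamma>"
    hence A': "s \<circ> x = y" using g by simp
    hence "s \<circ> y = x" using Sr_inv''[OF s] by metis
    hence "mlo s x = x" "mlo s y = x" unfolding mlo_def using A' lxy by auto
    thus ?thesis using le_refl[OF x] by simp
  next
    assume B: "le (s \<circ> x) (s \<circ> (x \<circ> refl \<gamma>))"
    hence B': "le (s \<circ> x) (s \<circ> y)" using g by simp
    show ?thesis
    proof (cases "L (s \<circ> x) < L x")
      case True
      hence m1: "mlo s x = s \<circ> x" unfolding mlo_def by simp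
      show ?thesis
      proof (cases "L (s \<circ> y) < L y")
        case True
        hence "mlo s y = s \<circ> y" unfolding mlo_def by simp
        thus ?thesis using m1 B' by simp
      next
        case False
        hence "mlo s y = y" unfolding mlo_def by simp
        thus ?thesis using m1 le_trans[OF le_s_down[OF s x True] xy] by simp
      qed
    next
      case False
      hence m1: "mlo s x = x" unfolding mlo_def by simp
      have up: "L x < L (s \<circ> x)" using False len_s_neq[OF s x] by linarith
      show ?thesis
      proof (cases "L (s \<circ> y) < L y")
        case True
        hence "mlo s y = s \<circ> y" unfolding mlo_def by simp
        thus ?thesis using m1 le_trans[OF le_s_up[OF s x up] B'] by simp
      next
        case False
        hence "mlo s y = y" unfolding mlo_def by simp
        thus ?thesis using m1 xy by simp
      qed
    qed
  qed
qed

lemma mhi_step: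
  assumes s: "s \<in> Sr" and st: "(x, y) \<in> bruhat_step \<Phi> f"
  shows "le (mhi s x) (mhi s y)"
proof -
  obtain \<gamma> where g: "x \<in> W" "\<gamma> \<in> P" "y = x \<circ> refl \<gamma>" "L x < L (x \<circ> refl \<gamma>)" using st step_iff by blast
  have x: "x \<in> W" using g by blast
  have y: "y \<in> W" using W_comp[OF x refl_W] g P_iff by blast
  have xy: "le x y" using le_step[OF x g(2) g(4)] g(3) by simp
  have lxy: "L x < L y" using g by simp
  from step_dich[OF s x g(2) g(4)] show ?thesis
  proof
    assume A: "s \<circ> x = x \<circ> refl \<gamma>"
    hence A': "s \<circ> x = y" using g by simp
    hence "s \<circ> y = x" using Sr_inv''[OF s] by metis
    hence "mhi s x = y" "mhi s y = y" unfolding mhi_def using A' lxy by auto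
    thus ?thesis using le_refl[OF y] by simp
  next
    assume B: "le (s \<circ> x) (s \<circ> (x \<circ> refl \<gamma>))"
    hence B': "le (s \<circ> x) (s \<circ> y)" using g by simp
    show ?thesis
    proof (cases "L x < L (s \<circ> x)")
      case True
      hence m1: "mhi s x = s \<circ> x" unfolding mhi_def by simp
      show ?thesis
      proof (cases "L y < L (s \<circ> y)")
        case True
        hence "mhi s y = s \<circ> y" unfolding mhi_def by simp
        thus ?thesis using m1 B' by simp
      next
        case False
        hence "mhi s y = y" unfolding mhi_def by simp
        moreover have "L (s \<circ> y) < L y" using False len_s_neq[OF s y] by linarith
        ultimately show ?thesis using m1 le_trans[OF B' le_s_down[OF s y]] by simp
      qed
    next
      case False
      hence m1: "mhi s x = x" unfolding mhi_def by simp
      show ?thesis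
      proof (cases "L y < L (s \<circ> y)")
        case True
        hence "mhi s y = s \<circ> y" unfolding mhi_def by simp
        thus ?thesis using m1 le_trans[OF xy le_s_up[OF s y True]] by simp
      next
        case False
        hence "mhi s y = y" unfolding mhi_def by simp
        thus ?thesis using m1 xy by simp
      qed
    qed
  qed
qed

lemma mlo_mono: assumes s: "s \<in> Sr" and le: "le x w" shows "le (mlo s x) (mlo s w)"
proof -
  have x: "x \<in> W" and r: "(x, w) \<in> (bruhat_step \<Phi> f)\<^sup>*" using le unfolding bruhat_le_def by auto
  from r show ?thesis
  proof (induction rule: rtrancl_induct)
    case base thus ?case using le_refl mlo_W[OF s x] by blast
  next
    case (step y z) thus ?case using mlo_step[OF s step(2)] le_trans by blast
  qed
qed

lemma mhi_mono: assumes s: "s \<in> Sr" and le: "le x w" shows "le (mhi s x) (mhi s w)"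
proof -
  have x: "x \<in> W" and r: "(x, w) \<in> (bruhat_step \<Phi> f)\<^sup>*" using le unfolding bruhat_le_def by auto
  from r show ?thesis
  proof (induction rule: rtrancl_induct)
    case base thus ?case using le_refl mhi_W[OF s x] by blast
  next
    case (step y z) thus ?case using mhi_step[OF s step(2)] le_trans by blast
  qed
qed



lemma omit_refl: assumes l: "set l \<subseteq> Sr" and i: "i \<in> {1..length l}"
  shows "\<exists>\<gamma>\<in>P. wprod l = wprod (omit i l) \<circ> refl \<gamma>"
proof -
  have il: "i - 1 < length l" using i by auto
  have dec: "l = take (i-1) l @ l ! (i-1) # drop (Suc (i-1)) l" using id_take_nth_drop[OF il] .
  have si: "Suc (i - Suc 0) = i" using i by auto
  define A where "A = wprod (take (i-1) l)"
  define a where "a = l ! (i-1)"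
  define B where "B = wprod (drop i l)"
  have aS: "a \<in> Sr" unfolding a_def using l il nth_mem by blast
  have BW: "B \<in> W" unfolding B_def by (rule W_wprod) (use set_drop_subset[of i l] l in blast)
  obtain \<beta> where b: "\<beta> \<in> P" "a \<circ> B = B \<circ> refl \<beta>" using left_as_right[OF aS BW] by blast
  have "wprod l = A \<circ> (a \<circ> B)"
    by (subst dec) (simp add: wprod_append A_def a_def B_def si comp_assoc)
  also have "\<dots> = (A \<circ> B) \<circ> refl \<beta>" using b by (simp add: comp_assoc)
  also have "A \<circ> B = wprod (omit i l)" unfolding omit_def A_def B_def by (simp add: wprod_append)
  finally show ?thesis using b by blast
qed

lemma main:
  assumes xW: "x \<in> W" and wW: "w \<in> W"
    and xw: "bruhat_less \<Phi> f x w"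
    and red: "reduced_word \<Phi> f ws w"
    and good: "good_word \<Phi> f x ws"
    and not1: "1 \<notin> lam \<Phi> f x ws"
  shows "\<not> bruhat_le \<Phi> f x (hd ws \<circ> w)
    \<and> Sxw \<Phi> f (hd ws \<circ> x) (hd ws \<circ> w) = Sxw \<Phi> f x w
    \<and> reduced_word \<Phi> f (tl ws) (hd ws \<circ> w)
    \<and> good_word \<Phi> f (hd ws \<circ> x) (tl ws)
    \<and> lam \<Phi> f (hd ws \<circ> x) (tl ws) = (\<lambda>i. i - 1) ` lam \<Phi> f x ws"
proof -
  have wsS: "set ws \<subseteq> Sr" and wsw: "wprod ws = w" and wsl: "length ws = L w"
    using red unfolding reduced_word_def by auto
  have lexw: "le x w" and xnw: "x \<noteq> w" using xw unfolding bruhat_less_def by auto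
  have "ws \<noteq> []"
  proof
    assume "ws = []"
    hence "lam \<Phi> f x ws = {}" unfolding lam_def by simp
    hence "x = wprod (nths ws UNIV)" using good unfolding good_word_def by simp
    hence "x = w" using \<open>ws = []\<close> wsw by simp
    thus False using xnw by simp
  qed
  then obtain s r where wsr: "ws = s # r" by (cases ws) auto
  have s: "s \<in> Sr" and rS: "set r \<subseteq> Sr" using wsS wsr by auto
  have hd: "hd ws = s" and tl: "tl ws = r" using wsr by auto
  define v where "v = wprod r"
  have vW: "v \<in> W" unfolding v_def using W_wprod[OF rS] .
  have wv: "w = s \<circ> v" using wsw wsr v_def by simp
  have sw: "s \<circ> w = v" using wv Sr_inv''[OF s] by simp
  have Lw: "L w = Suc (length r)" using wsl wsr by simp
  have Lv: "L v = length r"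
  proof -
    have le1: "L v \<le> length r" unfolding v_def by (rule len_le[OF rS])
    obtain l where l: "set l \<subseteq> Sr" "length l = L v" "wprod l = v" using len_word[OF vW] by blast
    have "L (wprod (s # l)) \<le> length (s # l)" by (rule len_le) (use l s in simp)
    hence "L w \<le> Suc (L v)" using l wv by simp
    thus ?thesis using le1 Lw by simp
  qed
  have redr: "reduced_word \<Phi> f r v" unfolding reduced_word_def using rS v_def Lv by simp
  have Lvw: "L v < L w" using Lv Lw by simp
  have mlow: "mlo s w = v" unfolding mlo_def using sw Lvw by simp
  have omit1: "omit 1 ws = r" using wsr omit_1 by simp
  have nxv: "\<not> le x v"
  proof
    assume "le x v"
    hence "1 \<in> lam \<Phi> f x ws" unfolding lam_def using omit1 v_def wsr by simp
    thus False using not1 by simp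
  qed
  define y where "y = s \<circ> x"
  have yW: "y \<in> W" unfolding y_def using Sr_comp_W[OF s xW] .
  have sy: "s \<circ> y = x" unfolding y_def using Sr_inv''[OF s] .
  have Lyx: "L y < L x"
  proof (rule ccontr)
    assume "\<not> L y < L x"
    hence "mlo s x = x" unfolding mlo_def y_def by simp
    hence "le x v" using mlo_mono[OF s lexw] mlow by simp
    thus False using nxv by simp
  qed
  have mlox: "mlo s x = y" unfolding mlo_def using Lyx y_def by simp
  have mhiy: "mhi s y = x" unfolding mhi_def using Lyx sy by simp
  have Seq: "Sxw \<Phi> f y v = Sxw \<Phi> f x w"
  proof (rule set_eqI)
    fix \<alpha>
    show "\<alpha> \<in> Sxw \<Phi> f y v \<longleftrightarrow> \<alpha> \<in> Sxw \<Phi> f x w"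
    proof (cases "\<alpha> \<in> P")
      case False thus ?thesis unfolding Sxw_def by simp
    next
      case aP: True
      have aPhi: "\<alpha> \<in> \<Phi>" using aP P_iff by blast
      define u where "u = w \<circ> refl \<alpha>"
      have uW: "u \<in> W" unfolding u_def using W_comp[OF wW refl_W[OF aPhi]] .
      have vu: "v \<circ> refl \<alpha> = s \<circ> u" unfolding u_def by (simp only: comp_assoc[symmetric] sw)
      have suW: "s \<circ> u \<in> W" using Sr_comp_W[OF s uW] .
      have lw: "bruhat_less \<Phi> f u w \<longleftrightarrow> L u < L w" unfolding u_def by (rule less_refl_iff[OF wW aP])
      have lv: "bruhat_less \<Phi> f (s \<circ> u) v \<longleftrightarrow> L (s \<circ> u) < L v" unfolding vu[symmetric] by (rule less_refl_iff[OF vW aP])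
      have A: "\<alpha> \<in> Sxw \<Phi> f x w \<longleftrightarrow> le x u \<and> L u < L w" unfolding Sxw_def using aP lw u_def by simp
      have B: "\<alpha> \<in> Sxw \<Phi> f y v \<longleftrightarrow> le y (s \<circ> u) \<and> L (s \<circ> u) < L v" unfolding Sxw_def using aP lv vu by simp
      have ssu: "s \<circ> (s \<circ> u) = u" by (rule Sr_inv''[OF s])
      show ?thesis unfolding A B
      proof
        assume h: "le y (s \<circ> u) \<and> L (s \<circ> u) < L v"
        have "L u \<le> L (s \<circ> u) + 1" using len_comp_ge[OF s uW] .
        hence Luw: "L u < L w" using h Lvw Lv Lw by simp
        have "le x u"
        proof (cases "L (s \<circ> u) < L u")
          case True
          have "mhi s (s \<circ> u) = u" unfolding mhi_def ssu using True by simp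
          thus ?thesis using mhi_mono[OF s conjunct1[OF h]] mhiy by simp
        next
          case False
          hence "mhi s (s \<circ> u) = s \<circ> u" unfolding mhi_def ssu by simp
          hence "le x (s \<circ> u)" using mhi_mono[OF s conjunct1[OF h]] mhiy by simp
          moreover have "le (s \<circ> u) v" using h lv unfolding bruhat_less_def by blast
          ultimately have "le x v" by (rule le_trans)
          thus ?thesis using nxv by simp
        qed
        thus "le x u \<and> L u < L w" using Luw by simp
      next
        assume h: "le x u \<and> L u < L w"
        have Luv: "L u \<le> L v" using h Lv Lw by simp
        show "le y (s \<circ> u) \<and> L (s \<circ> u) < L v"
        proof (cases "L (s \<circ> u) < L u")
          case True
          have "mlo s u = s \<circ> u" unfolding mlo_def using True by simp
          hence "le y (s \<circ> u)" using mlo_mono[OF s conjunct1[OF h]] mlox by simp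
          thus ?thesis using True Luv by simp
        next
          case False
          hence "mlo s u = u" unfolding mlo_def by simp
          moreover have "le u w" using h lw unfolding bruhat_less_def by blast
          ultimately have "le u v" using mlo_mono[OF s] mlow by metis
          hence "le x v" using h le_trans by blast
          thus ?thesis using nxv by simp
        qed
      qed
    qed
  qed
  have lamiff: "le y (wprod (omit j r)) \<longleftrightarrow> le x (wprod (omit (Suc j) ws))" if j: "j \<in> {1..length r}" for j
  proof -
    define vj where "vj = wprod (omit j r)"
    have vjW: "vj \<in> W" unfolding vj_def by (rule W_wprod) (use set_omit[of j r] rS in blast)
    have ws_om: "wprod (omit (Suc j) ws) = s \<circ> vj" unfolding vj_def wsr using omit_Cons_Suc[of j s r] j by simp
    have svj: "s \<circ> (s \<circ> vj) = vj" using Sr_inv''[OF s] .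
    have sujW: "s \<circ> vj \<in> W" using Sr_comp_W[OF s vjW] .
    show ?thesis unfolding ws_om vj_def[symmetric]
    proof (cases "L vj < L (s \<circ> vj)")
      case True
      have h1: "mhi s vj = s \<circ> vj" unfolding mhi_def using True by simp
      have h2: "mlo s (s \<circ> vj) = vj" unfolding mlo_def using True svj by simp
      show "le y vj \<longleftrightarrow> le x (s \<circ> vj)"
      proof
        assume "le y vj" thus "le x (s \<circ> vj)" using mhi_mono[OF s, of y vj] h1 mhiy by simp
      next
        assume "le x (s \<circ> vj)" thus "le y vj" using mlo_mono[OF s, of x "s \<circ> vj"] h2 mlox by simp
      qed
    next
      case False
      hence lt: "L (s \<circ> vj) < L vj" using len_s_neq[OF s vjW] by linarith
      have h1: "mhi s vj = vj" unfolding mhi_def using False by simp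
      obtain \<gamma> where g: "\<gamma> \<in> P" "wprod r = wprod (omit j r) \<circ> refl \<gamma>" using omit_refl[OF rS j] by blast
      have "L vj \<le> length (omit j r)" unfolding vj_def by (rule len_le) (use set_omit[of j r] rS in blast)
      hence "L vj < L (vj \<circ> refl \<gamma>)" using g(2) length_omit[OF j] Lv v_def j vj_def by auto
      hence "le vj (vj \<circ> refl \<gamma>)" by (rule le_step[OF vjW g(1)])
      hence vjv: "le vj v" using g(2) v_def vj_def by simp
      show "le y vj \<longleftrightarrow> le x (s \<circ> vj)"
      proof
        assume "le y vj"
        hence "le x vj" using mhi_mono[OF s, of y vj] h1 mhiy by simp
        hence "le x v" using vjv le_trans by blast
        thus "le x (s \<circ> vj)" using nxv by simp
      next
        assume h: "le x (s \<circ> vj)"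
        have "le y x" using lo_le[OF s xW] mlox by simp
        moreover have "le (s \<circ> vj) vj" using le_s_down[OF s vjW lt] .
        ultimately show "le y vj" using h le_trans by blast
      qed
    qed
  qed
  have lameq: "lam \<Phi> f y r = (\<lambda>i. i - 1) ` lam \<Phi> f x ws"
  proof (rule set_eqI)
    fix j
    show "j \<in> lam \<Phi> f y r \<longleftrightarrow> j \<in> (\<lambda>i. i - 1) ` lam \<Phi> f x ws"
    proof
      assume "j \<in> lam \<Phi> f y r"
      hence j: "j \<in> {1..length r}" and h: "le y (wprod (omit j r))" unfolding lam_def by auto
      have "Suc j \<in> lam \<Phi> f x ws" unfolding lam_def using j lamiff[OF j] h wsr by simp
      moreover have "j = Suc j - 1" by simp
      ultimately show "j \<in> (\<lambda>i. i - 1) ` lam \<Phi> f x ws" by (rule rev_image_eqI)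
    next
      assume "j \<in> (\<lambda>i. i - 1) ` lam \<Phi> f x ws"
      then obtain i where i: "i \<in> lam \<Phi> f x ws" "j = i - 1" by blast
      have i1: "i \<in> {1..length ws}" and h: "le x (wprod (omit i ws))" using i(1) unfolding lam_def by auto
      have "i \<noteq> 1" using i(1) not1 by auto
      hence ij: "i = Suc j" and j: "j \<in> {1..length r}" using i1 i(2) wsr by auto
      show "j \<in> lam \<Phi> f y r" unfolding lam_def using j lamiff[OF j] h ij by simp
    qed
  qed
  have setq: "{j. Suc j \<notin> lam \<Phi> f y r} = {j. Suc (Suc j) \<notin> lam \<Phi> f x ws}"
  proof (rule set_eqI)
    fix j
    have "Suc j \<in> lam \<Phi> f y r \<longleftrightarrow> Suc (Suc j) \<in> lam \<Phi> f x ws"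
    proof
      assume "Suc j \<in> lam \<Phi> f y r"
      hence "Suc j \<in> (\<lambda>i. i - 1) ` lam \<Phi> f x ws" unfolding lameq .
      then obtain i where i: "i \<in> lam \<Phi> f x ws" "Suc j = i - 1" by (rule imageE)
      have "i = Suc (Suc j)" using i(2) by linarith
      thus "Suc (Suc j) \<in> lam \<Phi> f x ws" using i(1) by simp
    next
      assume "Suc (Suc j) \<in> lam \<Phi> f x ws"
      moreover have "Suc j = Suc (Suc j) - 1" by simp
      ultimately have "Suc j \<in> (\<lambda>i. i - 1) ` lam \<Phi> f x ws" by (rule rev_image_eqI)
      thus "Suc j \<in> lam \<Phi> f y r" unfolding lameq .
    qed
    thus "j \<in> {j. Suc j \<notin> lam \<Phi> f y r} \<longleftrightarrow> j \<in> {j. Suc (Suc j) \<notin> lam \<Phi> f x ws}" by simp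
  qed
  define K where "K = {j. Suc j \<notin> lam \<Phi> f x ws}"
  have z: "0 \<in> K" using not1 unfolding K_def by simp
  have K2: "{j. Suc j \<in> K} = {j. Suc (Suc j) \<notin> lam \<Phi> f x ws}" unfolding K_def by simp
  have "x = wprod (nths ws K)" using good unfolding good_word_def K_def .
  also have "nths ws K = [s] @ nths r {j. Suc j \<in> K}"
    unfolding wsr nths_Cons using z by simp
  also have "wprod ([s] @ nths r {j. Suc j \<in> K}) = s \<circ> wprod (nths r {j. Suc (Suc j) \<notin> lam \<Phi> f x ws})"
    unfolding K2 by (simp add: wprod_append)
  finally have "s \<circ> x = s \<circ> (s \<circ> wprod (nths r {j. Suc (Suc j) \<notin> lam \<Phi> f x ws}))" by (rule arg_cong)
  hence "y = wprod (nths r {j. Suc (Suc j) \<notin> lam \<Phi> f x ws})"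
    unfolding y_def Sr_inv''[OF s] .
  hence goody: "good_word \<Phi> f y r" unfolding good_word_def setq .
  have "\<not> le x (s \<circ> w) \<and> Sxw \<Phi> f (s \<circ> x) (s \<circ> w) = Sxw \<Phi> f x w
    \<and> reduced_word \<Phi> f r (s \<circ> w) \<and> good_word \<Phi> f (s \<circ> x) r
    \<and> lam \<Phi> f (s \<circ> x) r = (\<lambda>i. i - 1) ` lam \<Phi> f x ws"
    unfolding sw y_def[symmetric] by (intro conjI nxv Seq redr goody lameq)
  thus ?thesis unfolding hd tl .
qed
end

theorem lemma5p1:
  fixes \<Phi> :: "'a::euclidean_space set" and f :: 'a
    and x w :: "'a \<Rightarrow> 'a" and ws :: "('a \<Rightarrow> 'a) list"
  assumes "reduced_root_system \<Phi>" and "regular \<Phi> f"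
    and "x \<in> weyl \<Phi> f" and "w \<in> weyl \<Phi> f"
    and "bruhat_less \<Phi> f x w"
    and "reduced_word \<Phi> f ws w"
    and "good_word \<Phi> f x ws"
    and "1 \<notin> lam \<Phi> f x ws"
  shows "\<not> bruhat_le \<Phi> f x (hd ws \<circ> w)
    \<and> Sxw \<Phi> f (hd ws \<circ> x) (hd ws \<circ> w) = Sxw \<Phi> f x w
    \<and> reduced_word \<Phi> f (tl ws) (hd ws \<circ> w)
    \<and> good_word \<Phi> f (hd ws \<circ> x) (tl ws)
    \<and> lam \<Phi> f (hd ws \<circ> x) (tl ws) = (\<lambda>i. i - 1) ` lam \<Phi> f x ws"
proof -
  interpret RS \<Phi> f using assms(1,2) by unfold_locales
  show ?thesis by (rule main[OF assms(3-8)])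
qed


end
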